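(* Let $X$ be a nonempty shift space over a finite alphabet. Then: (1) $X$ is boundedly supermultiplicative if and only if there exist constants $c_1,c_2>0$ such that for every $n\ge1$, $$c_1\le\frac{2^{n h(X)}}{|\mathcal{B}_n(X)|}\le c_2.$$ Consequently, if $X$ is boundedly supermultiplicative, a probability measure on $X$ is a Gibbs state if and only if it is a Gibbs-like state. (2) If $X$ admits a Gibbs state, then $X$ is boundedly supermultiplicative; in particular, every Gibbs state on $X$ is a Gibbs-like state.
   Context: $\mathcal{B}_n(X)$ is the set of words of length $n$ appearing in points of $X$, $\mathcal{B}(X)=\bigcup_n\mathcal{B}_n(X)$, and $h(X)=\lim_{n}\frac1n\log|\mathcal{B}_n(X)|$ with $\log$ to base $2$. $X$ is boundedly supermultiplicative if there is $K\ge1$ with $|\mathcal{B}_m(X)|\cdot|\mathcal{B}_n(X)|\le K|\mathcal{B}_{m+n}(X)|$ for all $m,n\ge1$. For a word $\omega$, $[\omega]$ denotes the cylinder set of points of $X$ having $\omega$ at a fixed position. A (Borel) probability measure $\mu$ on $X$ is a Gibbs-like state if there exist $c_1,c_2>0$ such that for all $\omega\in\mathcal{B}(X)$ of length $r$, $c_1\le\mu([\omega])\,|\mathcal{B}_r(X)|\le c_2$; it is a Gibbs state if there exist $c_1,c_2>0$ such that for all $\omega\in\mathcal{B}(X)$ of length $r$, $c_1\le\mu([\omega])\,2^{r h(X)}\le c_2$. *)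

theory Defs
  imports "HOL-Probability.Probability"
begin

definition occurs_in :: "'a list \<Rightarrow> (int \<Rightarrow> 'a) \<Rightarrow> bool" where
  "occurs_in w x \<longleftrightarrow> (\<exists>i::int. w = map (\<lambda>k. x (i + int k)) [0..<length w])"

definition shift_space :: "(int \<Rightarrow> 'a::finite) set \<Rightarrow> bool" where
  "shift_space X \<longleftrightarrow> (\<exists>F :: 'a list set. X = {x. \<forall>w\<in>F. \<not> occurs_in w x})"

definition blocks :: "(int \<Rightarrow> 'a) set \<Rightarrow> nat \<Rightarrow> 'a list set" where
  "blocks X n = {w. length w = n \<and> (\<exists>x\<in>X. occurs_in w x)}"

definition language :: "(int \<Rightarrow> 'a) set \<Rightarrow> 'a list set" where
  "language X = (\<Union>n\<in>{1..}. blocks X n)"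

definition entropy :: "(int \<Rightarrow> 'a) set \<Rightarrow> real" where
  "entropy X = lim (\<lambda>n. log 2 (real (card (blocks X n))) / real n)"

definition bounded_supermult :: "(int \<Rightarrow> 'a) set \<Rightarrow> bool" where
  "bounded_supermult X \<longleftrightarrow> (\<exists>K::real. K \<ge> 1 \<and>
     (\<forall>m n. m \<ge> 1 \<longrightarrow> n \<ge> 1 \<longrightarrow>
        real (card (blocks X m)) * real (card (blocks X n)) \<le> K * real (card (blocks X (m + n)))))"

definition cyl :: "(int \<Rightarrow> 'a) set \<Rightarrow> 'a list \<Rightarrow> (int \<Rightarrow> 'a) set" where
  "cyl X w = {x\<in>X. \<forall>k<length w. x (int k) = w ! k}"

(* Borel probability measure on X: the Borel sigma-algebra of the product
   topology (discrete alphabet) is generated by the cylinders. *)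
definition prob_measure_on :: "(int \<Rightarrow> 'a) set \<Rightarrow> (int \<Rightarrow> 'a) measure \<Rightarrow> bool" where
  "prob_measure_on X \<mu> \<longleftrightarrow> prob_space \<mu> \<and> space \<mu> = X \<and>
     sets \<mu> = sigma_sets X (range (cyl X))"

definition gibbs_like :: "(int \<Rightarrow> 'a) set \<Rightarrow> (int \<Rightarrow> 'a) measure \<Rightarrow> bool" where
  "gibbs_like X \<mu> \<longleftrightarrow> prob_measure_on X \<mu> \<and> (\<exists>c1 c2::real. c1 > 0 \<and> c2 > 0 \<and>
     (\<forall>w\<in>language X. c1 \<le> measure \<mu> (cyl X w) * real (card (blocks X (length w)))
        \<and> measure \<mu> (cyl X w) * real (card (blocks X (length w))) \<le> c2))"

definition gibbs :: "(int \<Rightarrow> 'a) set \<Rightarrow> (int \<Rightarrow> 'a) measure \<Rightarrow> bool" where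
  "gibbs X \<mu> \<longleftrightarrow> prob_measure_on X \<mu> \<and> (\<exists>c1 c2::real. c1 > 0 \<and> c2 > 0 \<and>
     (\<forall>w\<in>language X. c1 \<le> measure \<mu> (cyl X w) * 2 powr (real (length w) * entropy X)
        \<and> measure \<mu> (cyl X w) * 2 powr (real (length w) * entropy X) \<le> c2))"

end

theory Submission
  imports Defs
begin

lemma occurs_in_nth: "occurs_in w x \<longleftrightarrow> (\<exists>i::int. \<forall>k<length w. w ! k = x (i + int k))"
proof
  assume "occurs_in w x"
  then obtain i where eq: "w = map (\<lambda>k. x (i + int k)) [0..<length w]" unfolding occurs_in_def by blast
  have "\<forall>k<length w. w ! k = x (i + int k)"
  proof (intro allI impI)
    fix k assume k: "k < length w"
    from eq have "w ! k = (map (\<lambda>k. x (i + int k)) [0..<length w]) ! k" by (rule arg_cong)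
    also have "\<dots> = x (i + int k)" using k by simp
    finally show "w ! k = x (i + int k)" .
  qed
  thus "\<exists>i::int. \<forall>k<length w. w ! k = x (i + int k)" by blast
next
  assume "\<exists>i::int. \<forall>k<length w. w ! k = x (i + int k)"
  then obtain i where i: "\<forall>k<length w. w ! k = x (i + int k)" by blast
  have "w = map (\<lambda>k. x (i + int k)) [0..<length w]" by (rule nth_equalityI) (simp_all add: i)
  thus "occurs_in w x" unfolding occurs_in_def by blast
qed

lemma blocks_finite: "finite (blocks (X :: (int \<Rightarrow> 'a::finite) set) n)"
proof -
  show ?thesis by (rule finite_subset[OF _ finite_lists_length_eq[of "UNIV::'a set" n]]) (auto simp: blocks_def)
qed

lemma card_blocks_le: "card (blocks (X :: (int \<Rightarrow> 'a::finite) set) n) \<le> CARD('a) ^ n"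
proof -
  have "card (blocks X n) \<le> card {xs. set xs \<subseteq> (UNIV::'a set) \<and> length xs = n}"
    by (rule card_mono[OF finite_lists_length_eq]) (auto simp: blocks_def)
  thus ?thesis using card_lists_length_eq[of "UNIV::'a set" n] by simp
qed

lemma blocks_nonempty: assumes "X \<noteq> {}" shows "card (blocks (X :: (int \<Rightarrow> 'a::finite) set) n) \<ge> 1"
proof -
  obtain x where x: "x \<in> X" using assms by blast
  define w where "w = map (\<lambda>k. x (0 + int k)) [0..<n]"
  have "occurs_in w x" unfolding occurs_in_def w_def by (rule exI[of _ 0]) simp
  hence "w \<in> blocks X n" unfolding blocks_def w_def using x by auto
  hence "blocks X n \<noteq> {}" by blast
  thus ?thesis using blocks_finite[of X n] by (simp add: Suc_le_eq card_gt_0_iff)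
qed

lemma blocks_submult:
  "card (blocks (X :: (int \<Rightarrow> 'a::finite) set) (m + n)) \<le> card (blocks X m) * card (blocks X n)"
proof -
  have inj: "inj_on (\<lambda>w. (take m w, drop m w)) (blocks X (m + n))"
  proof (rule inj_onI)
    fix v w :: "'a list" assume "(take m v, drop m v) = (take m w, drop m w)"
    hence t: "take m v = take m w" and d: "drop m v = drop m w" by simp_all
    have "v = take m v @ drop m v" by simp
    also have "\<dots> = take m w @ drop m w" by (simp only: t d)
    also have "\<dots> = w" by simp
    finally show "v = w" .
  qed
  have sub: "(\<lambda>w. (take m w, drop m w)) ` blocks X (m + n) \<subseteq> blocks X m \<times> blocks X n"
  proof
    fix p assume "p \<in> (\<lambda>w. (take m w, drop m w)) ` blocks X (m + n)"
    then obtain w where w: "w \<in> blocks X (m+n)" and p: "p = (take m w, drop m w)" by blast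
    then obtain x i where x: "x \<in> X" and len: "length w = m + n"
      and occ: "\<forall>k<length w. w ! k = x (i + int k)"
      unfolding blocks_def occurs_in_nth by blast
    have "\<forall>k<length (take m w). take m w ! k = x (i + int k)" using occ len by auto
    moreover have "\<forall>k<length (drop m w). drop m w ! k = x ((i + int m) + int k)"
      using occ len by (auto simp: add.assoc)
    ultimately show "p \<in> blocks X m \<times> blocks X n"
      unfolding p blocks_def occurs_in_nth using x len by auto
  qed
  have "card (blocks X (m + n)) = card ((\<lambda>w. (take m w, drop m w)) ` blocks X (m + n))"
    using card_image[OF inj] by simp
  also have "\<dots> \<le> card (blocks X m \<times> blocks X n)"
    by (rule card_mono[OF _ sub]) (simp add: blocks_finite)
  finally show ?thesis by (simp add: card_cartesian_product)
qed

lemma blocks_mono: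
  assumes "m \<le> n"
  shows "card (blocks (X :: (int \<Rightarrow> 'a::finite) set) m) \<le> card (blocks X n)"
proof -
  have "blocks X m \<subseteq> take m ` blocks X n"
  proof
    fix w assume "w \<in> blocks X m"
    then obtain x i where x: "x \<in> X" and len: "length w = m"
      and occ: "\<forall>k<length w. w ! k = x (i + int k)"
      unfolding blocks_def occurs_in_nth by blast
    define w' where "w' = map (\<lambda>k. x (i + int k)) [0..<n]"
    have "occurs_in w' x" unfolding occurs_in_def w'_def by (rule exI[of _ i]) simp
    hence "w' \<in> blocks X n" unfolding blocks_def w'_def using x by auto
    moreover have "take m w' = w"
      using occ len assms by (auto simp: w'_def intro!: nth_equalityI)
    ultimately show "w \<in> take m ` blocks X n" by (rule rev_image_eqI[OF _ sym])
  qed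
  hence "card (blocks X m) \<le> card (take m ` blocks X n)"
    by (intro card_mono) (auto simp: blocks_finite)
  also have "\<dots> \<le> card (blocks X n)" by (rule card_image_le) (simp add: blocks_finite)
  finally show ?thesis .
qed

lemma cyl_sum:
  assumes "prob_measure_on X \<mu>" "n \<ge> 1"
  shows "(\<Sum>w\<in>blocks (X :: (int \<Rightarrow> 'a::finite) set) n. measure \<mu> (cyl X w)) = 1"
proof -
  have ps: "prob_space \<mu>" and sp: "space \<mu> = X" and ss: "sets \<mu> = sigma_sets X (range (cyl X))"
    using assms(1) unfolding prob_measure_on_def by auto
  interpret prob_space \<mu> by (rule ps)
  have U: "(\<Union>w\<in>blocks X n. cyl X w) = X"
  proof
    show "(\<Union>w\<in>blocks X n. cyl X w) \<subseteq> X" by (auto simp: cyl_def)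
    show "X \<subseteq> (\<Union>w\<in>blocks X n. cyl X w)"
    proof
      fix x assume x: "x \<in> X"
      define w where "w = map (\<lambda>k. x (0 + int k)) [0..<n]"
      have "occurs_in w x" unfolding occurs_in_def w_def by (rule exI[of _ 0]) simp
      hence "w \<in> blocks X n" unfolding blocks_def w_def using x by auto
      moreover have "x \<in> cyl X w"
        using x unfolding cyl_def w_def by simp
      ultimately show "x \<in> (\<Union>w\<in>blocks X n. cyl X w)" by blast
    qed
  qed
  have meas: "cyl X ` blocks X n \<subseteq> sets \<mu>"
    unfolding ss by (auto intro: sigma_sets.Basic)
  have disj: "disjoint_family_on (cyl X) (blocks X n)"
    unfolding disjoint_family_on_def
  proof (intro ballI impI)
    fix v w assume v: "v \<in> blocks X n" and w: "w \<in> blocks X n" and ne: "v \<noteq> w"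
    have lv: "length v = n" and lw: "length w = n" using v w by (auto simp: blocks_def)
    show "cyl X v \<inter> cyl X w = {}"
    proof (rule ccontr)
      assume "cyl X v \<inter> cyl X w \<noteq> {}"
      then obtain x where "x \<in> cyl X v" "x \<in> cyl X w" by blast
      hence "v = w" using lv lw by (auto simp: cyl_def intro!: nth_equalityI)
      thus False using ne by simp
    qed
  qed
  have "(\<Sum>w\<in>blocks X n. measure \<mu> (cyl X w)) = measure \<mu> (\<Union>w\<in>blocks X n. cyl X w)"
    by (rule finite_measure_finite_Union[OF blocks_finite meas disj, symmetric])
  also have "\<dots> = measure \<mu> X" by (simp only: U)
  also have "\<dots> = measure \<mu> (space \<mu>)" by (simp only: sp)
  also have "\<dots> = 1" by (rule prob_space)
  finally show ?thesis .
qed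

lemma fek_aux:
  fixes s :: "nat \<Rightarrow> real" and L lam :: real
  assumes s0: "\<And>n. 0 \<le> s n" and sl: "\<And>n. s n \<le> real n * lam"
   and sub: "\<And>m n. s (m+n) \<le> s m + s n"
   and sup: "\<And>m n. 1 \<le> m \<Longrightarrow> 1 \<le> n \<Longrightarrow> s m + s n \<le> s (m+n) + L"
   and mono: "\<And>m n. m \<le> n \<Longrightarrow> s m \<le> s n"
   and L: "0 \<le> L" and n: "1 \<le> n" and N: "1 \<le> N"
  shows "s N / N \<le> s n / n + n * lam / N" and "s n / n - L / n - n * lam / N \<le> s N / N"
proof -
  have a: "s (q*n) \<le> q * s n" for q
  proof (induction q)
    case 0 show ?case using sl[of 0] by simp
  next
    case (Suc q)
    have "s (Suc q * n) = s (n + q*n)" by simp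
    also have "\<dots> \<le> s n + s (q*n)" by (rule sub)
    finally show ?case using Suc by (simp add: algebra_simps)
  qed
  have b: "q * (s n - L) \<le> s (q*n)" for q
  proof (induction q)
    case 0 show ?case using s0[of 0] by simp
  next
    case (Suc q)
    show ?case
    proof (cases "q = 0")
      case True thus ?thesis using L by simp
    next
      case False
      hence "1 \<le> q * n" using n by simp
      hence "s (q*n) + s n \<le> s (q*n + n) + L" using sup n by blast
      thus ?thesis using Suc by (simp add: algebra_simps)
    qed
  qed
  define q where "q = N div n"
  define r where "r = N mod n"
  have Nqr: "N = q*n + r" unfolding q_def r_def by simp
  have rn: "r < n" unfolding r_def using n by simp
  have lam0: "0 \<le> lam" using s0[of 1] sl[of 1] by simp
  have Npos: "(0::real) < N" and npos: "(0::real) < n" using N n by auto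
  have "s N \<le> s (q*n) + s r" using sub[of "q*n" r] Nqr by simp
  also have "\<dots> \<le> q * s n + n * lam"
    using a[of q] sl[of r] rn lam0 by (smt (verit) mult_right_mono of_nat_less_imp_less less_imp_of_nat_less)
  finally have up: "s N \<le> q * s n + n * lam" .
  have qn: "real q * real n \<le> real N" using Nqr by (metis le_add1 of_nat_le_iff of_nat_mult)
  have "q * s n / N \<le> s n / n"
  proof -
    have "q * s n * n \<le> s n * N" using mult_right_mono[OF qn s0[of n]] by (simp add: algebra_simps)
    thus ?thesis using Npos npos by (simp add: field_simps)
  qed
  thus "s N / N \<le> s n / n + n * lam / N" using up Npos
    by (smt (verit, best) add_divide_distrib divide_right_mono)
  show "s n / n - L / n - n * lam / N \<le> s N / N"
  proof (cases "L \<le> s n")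
    case False
    have "s n / n - L / n < 0" using False npos by (simp add: field_simps)
    moreover have "0 \<le> n * lam / N" using lam0 npos Npos by simp
    moreover have "0 \<le> s N / N" using s0[of N] Npos by simp
    ultimately show ?thesis by linarith
  next
    case True
    have low: "q * (s n - L) \<le> s N" using b[of q] mono[of "q*n" N] Nqr by simp
    have "N < q*n + n" using Nqr rn by simp
    hence "real N < real q * real n + real n" by (metis of_nat_add of_nat_less_iff of_nat_mult)
    hence qn2: "real N - real n \<le> real q * real n" by linarith
    have "(real N - real n) * (s n - L) \<le> q * n * (s n - L)"
      using mult_right_mono[OF qn2] True by simp
    also have "\<dots> \<le> s N * n" using mult_right_mono[OF low, of n] by (simp add: algebra_simps)
    finally have k: "(real N - real n) * (s n - L) \<le> s N * n" .
    have "n * s n \<le> n * (n * lam)" using sl[of n] npos by simp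
    moreover have "0 \<le> L * n" using L by simp
    ultimately have "N * (s n - L) - n * (n*lam) \<le> s N * n" using k by (simp add: algebra_simps)
    hence "(N * (s n - L) - n * (n*lam)) / (n*N) \<le> (s N * n) / (n*N)"
      by (rule divide_right_mono) (use Npos npos in simp)
    moreover have "s n / n - L / n - n*lam/N = (N * (s n - L) - n * (n*lam)) / (n*N)"
      using Npos npos by (simp add: field_simps)
    moreover have "s N / N = (s N * n) / (n*N)" using Npos npos by (simp add: field_simps)
    ultimately show ?thesis by simp
  qed
qed

lemma fek_lim:
  fixes s :: "nat \<Rightarrow> real" and L lam :: real
  assumes s0: "\<And>n. 0 \<le> s n" and sl: "\<And>n. s n \<le> real n * lam"
   and sub: "\<And>m n. s (m+n) \<le> s m + s n"
   and sup: "\<And>m n. 1 \<le> m \<Longrightarrow> 1 \<le> n \<Longrightarrow> s m + s n \<le> s (m+n) + L"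
   and mono: "\<And>m n. m \<le> n \<Longrightarrow> s m \<le> s n"
   and L: "0 \<le> L"
  shows "\<And>n. 1 \<le> n \<Longrightarrow> s n / n - L / n \<le> lim (\<lambda>N. s N / real N) \<and> lim (\<lambda>N. s N / real N) \<le> s n / n"
proof -
  define a where "a = (\<lambda>N. s N / real N)"
  have B: "s N / N \<le> s n / n + n * lam / N" "s n / n - L / n - n * lam / N \<le> s N / N"
    if "1 \<le> n" "1 \<le> N" for n N
    using fek_aux[where s=s and L=L and lam=lam and n=n and N=N] s0 sl sub sup mono L that by blast+
  have lam0: "0 \<le> lam" using s0[of 1] sl[of 1] by simp
  have d: "\<bar>a N - a n\<bar> \<le> L / n + n * lam / N" if "1 \<le> n" "1 \<le> N" for n N
  proof -
    have "0 \<le> L / n" "0 \<le> n * lam / N" using L lam0 by simp_all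
    thus ?thesis using B[OF that(1) that(2)] unfolding a_def abs_le_iff by linarith
  qed
  have "Cauchy a"
  proof (rule metric_CauchyI)
    fix e :: real assume e: "0 < e"
    obtain n0 :: nat where n0: "4 * L / e < real n0" using reals_Archimedean2 by blast
    define n1 where "n1 = Suc n0"
    have n1: "1 \<le> n1" unfolding n1_def by simp
    have "4 * L / e < real n1" using n0 unfolding n1_def by simp
    hence "4 * L < e * n1" using e by (simp add: field_simps)
    hence L1: "L / n1 < e / 4" using n1 by (simp add: field_simps)
    obtain M0 :: nat where M0: "4 * n1 * lam / e < real M0" using reals_Archimedean2 by blast
    define M where "M = Suc M0"
    have M1: "1 \<le> M" unfolding M_def by simp
    have "4 * n1 * lam / e < real M" using M0 unfolding M_def by simp
    hence "4 * n1 * lam < e * M" using e by (simp add: field_simps)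
    hence LM: "n1 * lam / M < e / 4" using M1 by (simp add: field_simps)
    have t: "n1 * lam / N < e / 4" if "M \<le> N" for N
    proof -
      have "n1 * lam / N \<le> n1 * lam / M"
        using that M1 lam0 by (intro divide_left_mono) auto
      thus ?thesis using LM by linarith
    qed
    show "\<exists>M. \<forall>m\<ge>M. \<forall>n\<ge>M. dist (a m) (a n) < e"
    proof (intro exI allI impI)
      fix m k assume m: "M \<le> m" and k: "M \<le> k"
      have "\<bar>a m - a n1\<bar> < e / 2" using d[OF n1, of m] t[OF m] L1 m M1 by linarith
      moreover have "\<bar>a k - a n1\<bar> < e / 2" using d[OF n1, of k] t[OF k] L1 k M1 by linarith
      ultimately show "dist (a m) (a k) < e" unfolding dist_real_def by linarith
    qed
  qed
  hence conv: "a \<longlonglongrightarrow> lim a" using Cauchy_convergent convergent_LIMSEQ_iff by blast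
  fix n :: nat assume n: "1 \<le> n"
  have "lim a \<le> a n + 0"
  proof (rule LIMSEQ_le[OF conv])
    show "(\<lambda>N. a n + n * lam / real N) \<longlonglongrightarrow> a n + 0"
      by (intro tendsto_add tendsto_const lim_const_over_n)
    show "\<exists>N0. \<forall>N\<ge>N0. a N \<le> a n + n * lam / real N"
      using B(1)[OF n] unfolding a_def by (intro exI[of _ 1]) (auto simp: B)
  qed
  moreover have "a n - L / n - 0 \<le> lim a"
  proof (rule LIMSEQ_le[OF _ conv])
    show "(\<lambda>N. a n - L / n - n * lam / real N) \<longlonglongrightarrow> a n - L / n - 0"
      by (intro tendsto_diff tendsto_const lim_const_over_n)
    show "\<exists>N0. \<forall>N\<ge>N0. a n - L / n - n * lam / real N \<le> a N"
      using B(2)[OF n] unfolding a_def by (intro exI[of _ 1]) (auto simp: B)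
  qed
  ultimately show "s n / n - L / n \<le> lim (\<lambda>N. s N / real N) \<and> lim (\<lambda>N. s N / real N) \<le> s n / n"
    unfolding a_def by simp
qed


abbreviation P :: "(int \<Rightarrow> 'a) set \<Rightarrow> nat \<Rightarrow> real" where
  "P X n \<equiv> 2 powr (real n * entropy X)"

abbreviation Bn :: "(int \<Rightarrow> 'a) set \<Rightarrow> nat \<Rightarrow> real" where
  "Bn X n \<equiv> real (card (blocks X n))"

definition RC :: "(int \<Rightarrow> 'a) set \<Rightarrow> bool" where
  "RC X \<longleftrightarrow> (\<exists>c1 c2::real. c1 > 0 \<and> c2 > 0 \<and>
              (\<forall>n::nat. n \<ge> 1 \<longrightarrow>
                 c1 \<le> 2 powr (real n * entropy X) / real (card (blocks X n)) \<and>
                 2 powr (real n * entropy X) / real (card (blocks X n)) \<le> c2))"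

lemma RC_alt:
  assumes "X \<noteq> {}"
  shows "RC (X :: (int \<Rightarrow> 'a::finite) set) \<longleftrightarrow> (\<exists>c1 c2::real. c1 > 0 \<and> c2 > 0 \<and>
     (\<forall>n::nat. n \<ge> 1 \<longrightarrow> c1 * Bn X n \<le> P X n \<and> P X n \<le> c2 * Bn X n))"
proof -
  have "\<And>n. 0 < Bn X n" using blocks_nonempty[OF assms] by (simp add: Suc_le_eq)
  hence "\<And>n c. (c \<le> P X n / Bn X n) = (c * Bn X n \<le> P X n)"
        "\<And>n c. (P X n / Bn X n \<le> c) = (P X n \<le> c * Bn X n)"
    by (simp_all add: le_divide_eq divide_le_eq)
  thus ?thesis unfolding RC_def by simp
qed

lemma BSM_imp_RC:
  assumes ne: "X \<noteq> {}" and bsm: "bounded_supermult (X :: (int \<Rightarrow> 'a::finite) set)"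
  shows "RC X"
proof -
  obtain K where K1: "K \<ge> 1" and K: "\<And>m n. m \<ge> 1 \<Longrightarrow> n \<ge> 1 \<Longrightarrow>
        Bn X m * Bn X n \<le> K * Bn X (m + n)"
    using bsm unfolding bounded_supermult_def by blast
  define s where "s = (\<lambda>n. log 2 (Bn X n))"
  define L where "L = log 2 K"
  define lam where "lam = log 2 (real CARD('a))"
  have bpos: "\<And>n. 1 \<le> Bn X n" using blocks_nonempty[OF ne] by simp
  have s0: "0 \<le> s n" for n
  proof -
    have "1 \<le> Bn X n" by (rule bpos)
    thus ?thesis unfolding s_def using zero_le_log_cancel_iff[of 2 "Bn X n"] by linarith
  qed
  have sl: "\<And>n. s n \<le> real n * lam"
  proof -
    fix n
    have "Bn X n \<le> real CARD('a) ^ n" by (simp only: of_nat_power[symmetric] of_nat_le_iff card_blocks_le)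
    hence "s n \<le> log 2 (real CARD('a) ^ n)" unfolding s_def using bpos[of n] by simp
    thus "s n \<le> real n * lam" unfolding lam_def by (simp add: log_nat_power)
  qed
  have sub: "\<And>m n. s (m+n) \<le> s m + s n"
  proof -
    fix m n
    have "Bn X (m+n) \<le> Bn X m * Bn X n" by (simp only: of_nat_mult[symmetric] of_nat_le_iff blocks_submult)
    hence "s (m+n) \<le> log 2 (Bn X m * Bn X n)" unfolding s_def using bpos[of "m+n"] by simp
    thus "s (m+n) \<le> s m + s n" unfolding s_def using bpos[of m] bpos[of n] by (simp add: log_mult)
  qed
  have sup: "\<And>m n. 1 \<le> m \<Longrightarrow> 1 \<le> n \<Longrightarrow> s m + s n \<le> s (m+n) + L"
  proof -
    fix m n :: nat assume "1 \<le> m" "1 \<le> n"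
    hence "Bn X m * Bn X n \<le> K * Bn X (m + n)" by (rule K)
    moreover have "0 < Bn X m * Bn X n" using bpos[of m] bpos[of n] by simp
    moreover have "0 < K * Bn X (m + n)" using bpos[of "m+n"] K1 by simp
    ultimately have "log 2 (Bn X m * Bn X n) \<le> log 2 (K * Bn X (m + n))"
      by simp
    thus "s m + s n \<le> s (m+n) + L" unfolding s_def L_def
      using bpos[of m] bpos[of n] bpos[of "m+n"] K1 by (simp add: log_mult)
  qed
  have mono: "s m \<le> s n" if "m \<le> n" for m n
  proof -
    have "Bn X m \<le> Bn X n" using blocks_mono[OF that, of X] by simp
    thus ?thesis unfolding s_def using bpos[of m] by simp
  qed
  have L: "0 \<le> L" unfolding L_def using K1 by simp
  have ent: "entropy X = lim (\<lambda>N. s N / real N)" unfolding entropy_def s_def ..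
  have FL: "s n / n - L / n \<le> lim (\<lambda>N. s N / real N) \<and> lim (\<lambda>N. s N / real N) \<le> s n / n"
    if "1 \<le> n" for n
    apply (rule fek_lim[where s=s and L=L and lam=lam])
          apply (rule s0)
         apply (rule sl)
        apply (rule sub)
       apply (rule sup; assumption)
      apply (rule mono; assumption)
     apply (rule L)
    apply (rule that)
    done
  show ?thesis unfolding RC_alt[OF ne]
  proof (rule exI[of _ "1/K"], rule exI[of _ 1], intro conjI allI impI)
    show "0 < 1/K" "(0::real) < 1" using K1 by auto
    fix n :: nat assume n: "1 \<le> n"
    have npos: "(0::real) < n" using n by simp
    have h1: "s n / n - L / n \<le> entropy X" and h2: "entropy X \<le> s n / n" using FL[OF n] ent by auto
    have "s n - L \<le> n * entropy X" using h1 npos by (simp add: field_simps)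
    hence "2 powr (s n - L) \<le> P X n" by simp
    moreover have "2 powr (s n - L) = Bn X n / K"
      unfolding s_def L_def using bpos[of n] K1 by (simp add: powr_diff)
    ultimately show "1 / K * Bn X n \<le> P X n" by simp
    have "n * entropy X \<le> s n" using h2 npos by (simp add: field_simps)
    hence "P X n \<le> 2 powr (s n)" by simp
    moreover have "2 powr (s n) = Bn X n" unfolding s_def using bpos[of n] by simp
    ultimately show "P X n \<le> 1 * Bn X n" by simp
  qed
qed

lemma RC_imp_BSM:
  assumes ne: "X \<noteq> {}" and rc: "RC (X :: (int \<Rightarrow> 'a::finite) set)"
  shows "bounded_supermult X"
proof -
  obtain c1 c2 :: real where c1: "c1 > 0" and c2: "c2 > 0"
    and c: "\<And>n. n \<ge> 1 \<Longrightarrow> c1 * Bn X n \<le> P X n \<and> P X n \<le> c2 * Bn X n"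
    using rc unfolding RC_alt[OF ne] by blast
  have bpos: "\<And>n. 1 \<le> Bn X n" using blocks_nonempty[OF ne] by simp
  define K where "K = max 1 (c2 / c1^2)"
  show ?thesis unfolding bounded_supermult_def
  proof (intro exI[of _ K] conjI allI impI)
    show "1 \<le> K" unfolding K_def by simp
    fix m n :: nat assume m: "1 \<le> m" and n: "1 \<le> n"
    have Pmn: "P X (m+n) = P X m * P X n"
      by (simp only: of_nat_add distrib_right powr_add)
    have Pm0: "0 \<le> P X m" by simp
    have cn0: "0 \<le> c1 * Bn X n" using c1 bpos[of n] by simp
    have "c1 * Bn X m * (c1 * Bn X n) \<le> P X m * P X n"
      by (rule mult_mono[OF c[OF m, THEN conjunct1] c[OF n, THEN conjunct1] Pm0 cn0])
    also have "\<dots> = P X (m+n)" using Pmn by simp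
    also have "\<dots> \<le> c2 * Bn X (m+n)" using c[of "m+n"] m by simp
    finally have f: "c1 * Bn X m * (c1 * Bn X n) \<le> c2 * Bn X (m+n)" .
    have e1: "c1^2 * (Bn X m * Bn X n) = c1 * Bn X m * (c1 * Bn X n)" by (simp add: power2_eq_square mult_ac)
    have c1sq: "0 < c1^2" using c1 by simp
    have "Bn X m * Bn X n = (c1^2 * (Bn X m * Bn X n)) / c1^2" using c1sq by simp
    also have "\<dots> \<le> (c2 * Bn X (m+n)) / c1^2"
    proof (rule divide_right_mono)
      show "c1\<^sup>2 * (Bn X m * Bn X n) \<le> c2 * Bn X (m + n)" using f by (simp only: e1)
    qed (use c1sq in simp)
    also have "\<dots> = c2 / c1^2 * Bn X (m+n)" by simp
    also have "\<dots> \<le> K * Bn X (m+n)" unfolding K_def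
      using bpos[of "m+n"] by (intro mult_right_mono) simp_all
    finally show "Bn X m * Bn X n \<le> K * Bn X (m + n)" .
  qed
qed

lemma lang_len: "w \<in> language X \<Longrightarrow> w \<in> blocks X (length w) \<and> length w \<ge> 1"
  unfolding language_def blocks_def by auto

lemma real_aux:
  fixes m d1 d2 B P c1 c2 :: real
  assumes m: "0 \<le> m" and d1: "0 < d1" and d2: "0 < d2" and l: "d1 * B \<le> P" and u: "P \<le> d2 * B"
  shows "c1 \<le> m * P \<Longrightarrow> c1 / d2 \<le> m * B"
    and "m * P \<le> c2 \<Longrightarrow> m * B \<le> c2 / d1"
    and "c1 \<le> m * B \<Longrightarrow> c1 * d1 \<le> m * P"
    and "m * B \<le> c2 \<Longrightarrow> m * P \<le> c2 * d2"
proof -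
  have A: "m * P \<le> d2 * (m * B)" using mult_left_mono[OF u m] by (simp add: mult_ac)
  have C: "d1 * (m * B) \<le> m * P" using mult_left_mono[OF l m] by (simp add: mult_ac)
  show "c1 / d2 \<le> m * B" if "c1 \<le> m * P"
  proof -
    have "c1 \<le> d2 * (m * B)" using that A by linarith
    thus ?thesis using d2 by (simp add: pos_divide_le_eq mult.commute)
  qed
  show "m * B \<le> c2 / d1" if "m * P \<le> c2"
  proof -
    have "d1 * (m * B) \<le> c2" using that C by linarith
    thus ?thesis using d1 by (simp add: pos_le_divide_eq mult.commute)
  qed
  show "c1 * d1 \<le> m * P" if "c1 \<le> m * B"
  proof -
    have "c1 * d1 \<le> d1 * (m * B)" using mult_right_mono[OF that, of d1] d1 by (simp add: mult.commute)
    thus ?thesis using C by linarith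
  qed
  show "m * P \<le> c2 * d2" if "m * B \<le> c2"
  proof -
    have "d2 * (m * B) \<le> c2 * d2" using mult_right_mono[OF that, of d2] d2 by (simp add: mult.commute)
    thus ?thesis using A by linarith
  qed
qed

lemma RC_gibbs_iff:
  assumes ne: "X \<noteq> {}" and rc: "RC (X :: (int \<Rightarrow> 'a::finite) set)" and pm: "prob_measure_on X \<mu>"
  shows "gibbs X \<mu> \<longleftrightarrow> gibbs_like X \<mu>"
proof -
  obtain d1 d2 :: real where d1: "d1 > 0" and d2: "d2 > 0"
    and d0: "\<forall>n. n \<ge> 1 \<longrightarrow> d1 * Bn X n \<le> P X n \<and> P X n \<le> d2 * Bn X n"
    using rc unfolding RC_alt[OF ne] by blast
  note d = d0[rule_format]
  have mnn: "\<And>A. 0 \<le> measure \<mu> A" by (rule measure_nonneg)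
  have R: "c1 \<le> m * P X (length w) \<Longrightarrow> c1 / d2 \<le> m * Bn X (length w)"
     "m * P X (length w) \<le> c2 \<Longrightarrow> m * Bn X (length w) \<le> c2 / d1"
     "c1 \<le> m * Bn X (length w) \<Longrightarrow> c1 * d1 \<le> m * P X (length w)"
     "m * Bn X (length w) \<le> c2 \<Longrightarrow> m * P X (length w) \<le> c2 * d2"
    if "w \<in> language X" "0 \<le> m" for w m c1 c2
  proof -
    have n: "length w \<ge> 1" using lang_len[OF that(1)] by simp
    note rr = real_aux[OF that(2) d1 d2 d[OF n, THEN conjunct1] d[OF n, THEN conjunct2]]
    show "c1 \<le> m * P X (length w) \<Longrightarrow> c1 / d2 \<le> m * Bn X (length w)" by (rule rr(1))
    show "m * P X (length w) \<le> c2 \<Longrightarrow> m * Bn X (length w) \<le> c2 / d1" by (rule rr(2))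
    show "c1 \<le> m * Bn X (length w) \<Longrightarrow> c1 * d1 \<le> m * P X (length w)" by (rule rr(3))
    show "m * Bn X (length w) \<le> c2 \<Longrightarrow> m * P X (length w) \<le> c2 * d2" by (rule rr(4))
  qed
  show ?thesis
  proof
    assume "gibbs X \<mu>"
    then obtain c1 c2 :: real where c1: "c1 > 0" and c2: "c2 > 0" and
      c0: "\<forall>w\<in>language X. c1 \<le> measure \<mu> (cyl X w) * P X (length w)
          \<and> measure \<mu> (cyl X w) * P X (length w) \<le> c2"
      unfolding gibbs_def by blast
    note c = c0[rule_format]
    show "gibbs_like X \<mu>" unfolding gibbs_like_def
    proof (rule conjI[OF pm], rule exI[of _ "c1/d2"], rule exI[of _ "c2/d1"], intro conjI ballI)
      show "0 < c1/d2" "0 < c2/d1" using c1 c2 d1 d2 by auto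
      fix w assume w: "w \<in> language X"
      show "c1 / d2 \<le> measure \<mu> (cyl X w) * Bn X (length w)"
        by (rule R(1)[OF w mnn]) (use c[OF w] in blast)
      show "measure \<mu> (cyl X w) * Bn X (length w) \<le> c2 / d1"
        by (rule R(2)[OF w mnn]) (use c[OF w] in blast)
    qed
  next
    assume "gibbs_like X \<mu>"
    then obtain c1 c2 :: real where c1: "c1 > 0" and c2: "c2 > 0" and
      c0: "\<forall>w\<in>language X. c1 \<le> measure \<mu> (cyl X w) * Bn X (length w)
          \<and> measure \<mu> (cyl X w) * Bn X (length w) \<le> c2"
      unfolding gibbs_like_def by blast
    note c = c0[rule_format]
    show "gibbs X \<mu>" unfolding gibbs_def
    proof (rule conjI[OF pm], rule exI[of _ "c1*d1"], rule exI[of _ "c2*d2"], intro conjI ballI)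
      show "0 < c1*d1" "0 < c2*d2" using c1 c2 d1 d2 by auto
      fix w assume w: "w \<in> language X"
      show "c1 * d1 \<le> measure \<mu> (cyl X w) * P X (length w)"
        by (rule R(3)[OF w mnn]) (use c[OF w] in blast)
      show "measure \<mu> (cyl X w) * P X (length w) \<le> c2 * d2"
        by (rule R(4)[OF w mnn]) (use c[OF w] in blast)
    qed
  qed
qed

lemma gibbs_imp_RC:
  assumes ne: "X \<noteq> {}" and g: "gibbs (X :: (int \<Rightarrow> 'a::finite) set) \<mu>"
  shows "RC X"
proof -
  obtain c1 c2 :: real where c1: "c1 > 0" and c2: "c2 > 0" and pm: "prob_measure_on X \<mu>" and
    c0: "\<forall>w\<in>language X. c1 \<le> measure \<mu> (cyl X w) * P X (length w)
        \<and> measure \<mu> (cyl X w) * P X (length w) \<le> c2"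
    using g unfolding gibbs_def by blast
  note c = c0[rule_format]
  show ?thesis unfolding RC_alt[OF ne]
  proof (rule exI[of _ c1], rule exI[of _ c2], intro conjI allI impI)
    show "0 < c1" "0 < c2" using c1 c2 by auto
    fix n :: nat assume n: "1 \<le> n"
    have inl: "\<And>w. w \<in> blocks X n \<Longrightarrow> w \<in> language X \<and> length w = n"
      unfolding language_def blocks_def using n by auto
    have S: "(\<Sum>w\<in>blocks X n. measure \<mu> (cyl X w)) = 1" by (rule cyl_sum[OF pm n])
    have "P X n = (\<Sum>w\<in>blocks X n. measure \<mu> (cyl X w) * P X n)"
      using S by (simp add: sum_distrib_right[symmetric])
    note eq = this
    have "(\<Sum>w\<in>blocks X n. c1) \<le> (\<Sum>w\<in>blocks X n. measure \<mu> (cyl X w) * P X n)"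
      by (rule sum_mono) (metis c inl)
    thus "c1 * Bn X n \<le> P X n" using eq by (simp add: mult.commute)
    have "(\<Sum>w\<in>blocks X n. measure \<mu> (cyl X w) * P X n) \<le> (\<Sum>w\<in>blocks X n. c2)"
      by (rule sum_mono) (metis c inl)
    thus "P X n \<le> c2 * Bn X n" using eq by (simp add: mult.commute)
  qed
qed

theorem proposition3p13:
  fixes X :: "(int \<Rightarrow> 'a::finite) set"
  assumes "shift_space X" and "X \<noteq> {}"
  shows "(bounded_supermult X \<longleftrightarrow>
           (\<exists>c1 c2::real. c1 > 0 \<and> c2 > 0 \<and>
              (\<forall>n::nat. n \<ge> 1 \<longrightarrow>
                 c1 \<le> 2 powr (real n * entropy X) / real (card (blocks X n)) \<and>
                 2 powr (real n * entropy X) / real (card (blocks X n)) \<le> c2)))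
       \<and> (bounded_supermult X \<longrightarrow>
           (\<forall>\<mu>. prob_measure_on X \<mu> \<longrightarrow> (gibbs X \<mu> \<longleftrightarrow> gibbs_like X \<mu>)))
       \<and> ((\<exists>\<mu>. gibbs X \<mu>) \<longrightarrow>
           bounded_supermult X \<and> (\<forall>\<mu>. gibbs X \<mu> \<longrightarrow> gibbs_like X \<mu>))"
proof -
  note ne = assms(2)
  have E: "bounded_supermult X \<longleftrightarrow> RC X" using BSM_imp_RC[OF ne] RC_imp_BSM[OF ne] by blast
  have G: "RC X \<Longrightarrow> prob_measure_on X \<mu> \<Longrightarrow> (gibbs X \<mu> \<longleftrightarrow> gibbs_like X \<mu>)" for \<mu>
    using RC_gibbs_iff[OF ne] by blast
  have pmg: "gibbs X \<mu> \<Longrightarrow> prob_measure_on X \<mu>" for \<mu> unfolding gibbs_def by simp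
  show ?thesis
    using E G gibbs_imp_RC[OF ne] pmg unfolding RC_def[symmetric] by blast
qed

end
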